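(* Let $\mathcal{P}$ be a finite poset of composition length at least $3$ whose Hasse diagram is a rooted tree, and assume the root has a unique successor. Let $M$ be a $k\mathcal{P}$-module such that $[M]\in\mathsf{G}^0(\mathcal{P},k)$, i.e. $\partial_0^*M\cong\partial_1^*M$ as $k\mathcal{G}^{\mathcal{P}}_1$-modules. Then $$M\cong\underline{k}^{\oplus n}\oplus S_{\mathcal{P}}^{\oplus d}$$ for some non-negative integers $n,d$; in fact $n=\operatorname{rank}M(x<y)$ for any strict relation $x<y$ in $\mathcal{P}$ and $d=\dim_k\ker M(x<y)$ for any non-maximal $x$ and any $y>x$.
   Context: A poset is viewed as a category with a unique morphism $x\to y$ iff $x\le y$; a $k\mathcal{P}$-module is a functor to finite-dimensional $k$-vector spaces ($k$ a field). The composition length is the maximal length of a chain of covering relations. The Hasse diagram is a rooted tree means there is a unique minimal element (the root) and every other element has exactly one lower cover; a successor of $x$ is an upper cover of $x$. $\underline{k}$ is the constant module with value $k$ and identity maps; $S_{\mathcal{P}}$ is the module with value $k$ at every element and zero maps for all strict relations. $\mathcal{G}^{\mathcal{P}}_1$ is the poset of strict relations $a<b$ (written $[a<b]$) with $[a<b]\le[c<d]$ iff they are equal or $b\le c$; $\partial_0[a<b]=b$, $\partial_1[a<b]=a$, $F^*M=M\circ F$; $\mathsf{G}^0(\mathcal{P},k)$ is the kernel of $\partial_0^*-\partial_1^*$ on the split Grothendieck group of $k\mathcal{P}$-modules. *)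

theory Defs
  imports "Jordan_Normal_Form.Matrix_Kernel" "Jordan_Normal_Form.DL_Rank"
begin

definition partial_order_on' :: "'a set \<Rightarrow> ('a \<Rightarrow> 'a \<Rightarrow> bool) \<Rightarrow> bool" where
  "partial_order_on' P leq \<longleftrightarrow>
     (\<forall>x\<in>P. leq x x) \<and>
     (\<forall>x\<in>P. \<forall>y\<in>P. leq x y \<and> leq y x \<longrightarrow> x = y) \<and>
     (\<forall>x\<in>P. \<forall>y\<in>P. \<forall>z\<in>P. leq x y \<and> leq y z \<longrightarrow> leq x z)"

definition strict :: "('a \<Rightarrow> 'a \<Rightarrow> bool) \<Rightarrow> 'a \<Rightarrow> 'a \<Rightarrow> bool" where
  "strict leq x y \<longleftrightarrow> leq x y \<and> x \<noteq> y"

definition covers :: "'a set \<Rightarrow> ('a \<Rightarrow> 'a \<Rightarrow> bool) \<Rightarrow> 'a \<Rightarrow> 'a \<Rightarrow> bool" where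
  "covers P leq x y \<longleftrightarrow> x \<in> P \<and> y \<in> P \<and> strict leq x y \<and>
      \<not> (\<exists>z\<in>P. strict leq x z \<and> strict leq z y)"

definition comp_length :: "'a set \<Rightarrow> ('a \<Rightarrow> 'a \<Rightarrow> bool) \<Rightarrow> nat" where
  "comp_length P leq = Max {n. \<exists>c :: nat \<Rightarrow> 'a. \<forall>i<n. covers P leq (c i) (c (Suc i))}"

definition hasse_rooted_tree :: "'a set \<Rightarrow> ('a \<Rightarrow> 'a \<Rightarrow> bool) \<Rightarrow> 'a \<Rightarrow> bool" where
  "hasse_rooted_tree P leq r \<longleftrightarrow>
     r \<in> P \<and> (\<forall>x\<in>P. (\<not> (\<exists>y\<in>P. strict leq y x)) \<longleftrightarrow> x = r) \<and>
     (\<forall>x\<in>P - {r}. \<exists>!y. covers P leq y x)"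

(* A kP-module, with M(x) = k^(dim x) and structure maps as matrices
   (every finite-dimensional k-vector space is isomorphic to some k^n). *)
type_synonym ('a, 'k) pmod = "('a \<Rightarrow> nat) \<times> ('a \<Rightarrow> 'a \<Rightarrow> 'k mat)"

definition is_pmod :: "'a set \<Rightarrow> ('a \<Rightarrow> 'a \<Rightarrow> bool) \<Rightarrow> ('a, 'k::field) pmod \<Rightarrow> bool" where
  "is_pmod P leq M \<longleftrightarrow>
     (\<forall>x\<in>P. \<forall>y\<in>P. leq x y \<longrightarrow> snd M x y \<in> carrier_mat (fst M y) (fst M x)) \<and>
     (\<forall>x\<in>P. snd M x x = 1\<^sub>m (fst M x)) \<and>
     (\<forall>x\<in>P. \<forall>y\<in>P. \<forall>z\<in>P. leq x y \<and> leq y z \<longrightarrow> snd M y z * snd M x y = snd M x z)"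

definition pmod_iso :: "'a set \<Rightarrow> ('a \<Rightarrow> 'a \<Rightarrow> bool) \<Rightarrow> ('a, 'k::field) pmod \<Rightarrow> ('a, 'k) pmod \<Rightarrow> bool" where
  "pmod_iso P leq M N \<longleftrightarrow>
     (\<exists>\<phi>. (\<forall>x\<in>P. \<phi> x \<in> carrier_mat (fst N x) (fst M x) \<and> invertible_mat (\<phi> x)) \<and>
          (\<forall>x\<in>P. \<forall>y\<in>P. leq x y \<longrightarrow> \<phi> y * snd M x y = snd N x y * \<phi> x))"

definition pmod_sum :: "('a, 'k::field) pmod \<Rightarrow> ('a, 'k) pmod \<Rightarrow> ('a, 'k) pmod" where
  "pmod_sum M N = ((\<lambda>x. fst M x + fst N x),
     (\<lambda>x y. four_block_mat (snd M x y) (0\<^sub>m (fst M y) (fst N x))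
                           (0\<^sub>m (fst N y) (fst M x)) (snd N x y)))"

definition pmod_zero :: "('a, 'k::field) pmod" where
  "pmod_zero = ((\<lambda>x. 0), (\<lambda>x y. 0\<^sub>m 0 0))"

fun pmod_pow :: "('a, 'k::field) pmod \<Rightarrow> nat \<Rightarrow> ('a, 'k) pmod" where
  "pmod_pow M 0 = pmod_zero"
| "pmod_pow M (Suc n) = pmod_sum M (pmod_pow M n)"

definition const_mod :: "('a, 'k::field) pmod" where
  "const_mod = ((\<lambda>x. 1), (\<lambda>x y. 1\<^sub>m 1))"

definition S_mod :: "('a, 'k::field) pmod" where
  "S_mod = ((\<lambda>x. 1), (\<lambda>x y. if x = y then 1\<^sub>m 1 else 0\<^sub>m 1 1))"

(* the poset G_1^P of strict relations [a<b], encoded as pairs (a,b) *)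
definition G1_carrier :: "'a set \<Rightarrow> ('a \<Rightarrow> 'a \<Rightarrow> bool) \<Rightarrow> ('a \<times> 'a) set" where
  "G1_carrier P leq = {(a, b). a \<in> P \<and> b \<in> P \<and> strict leq a b}"

definition G1_le :: "('a \<Rightarrow> 'a \<Rightarrow> bool) \<Rightarrow> ('a \<times> 'a) \<Rightarrow> ('a \<times> 'a) \<Rightarrow> bool" where
  "G1_le leq u v \<longleftrightarrow> u = v \<or> leq (snd u) (fst v)"

definition d0 :: "('a \<times> 'a) \<Rightarrow> 'a" where "d0 u = snd u"
definition d1 :: "('a \<times> 'a) \<Rightarrow> 'a" where "d1 u = fst u"

definition pullback :: "('b \<Rightarrow> 'a) \<Rightarrow> ('a, 'k::field) pmod \<Rightarrow> ('b, 'k) pmod" where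
  "pullback F M = ((\<lambda>u. fst M (F u)), (\<lambda>u v. snd M (F u) (F v)))"

definition mat_rank :: "'k::field mat \<Rightarrow> nat" where
  "mat_rank A = vec_space.rank (dim_row A) A"

end

theory Submission
  imports Defs
begin


lemma rank_nullity_mat:
  fixes A :: "'k::field mat"
  assumes A: "A \<in> carrier_mat nr nc"
  shows "vec_space.rank nr A + kernel_dim A = nc"
proof -
  interpret NR: vec_space "TYPE('k)" nr .
  interpret NC: vec_space "TYPE('k)" nc .
  interpret KA: kernel nr nc A by (unfold_locales, rule A)
  interpret L: linear_map class_ring "module_vec TYPE('k) nc" "module_vec TYPE('k) nr" "\<lambda>v. A *\<^sub>v v"
  proof (unfold_locales)
    show "(\<lambda>v. A *\<^sub>v v) \<in> LinearCombinations.module_hom class_ring (module_vec TYPE('k) nc) (module_vec TYPE('k) nr)"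
      unfolding LinearCombinations.module_hom_def using A
      by (auto simp: module_vec_simps mult_add_distrib_mat_vec mult_mat_vec)
  qed
  have im: "L.imT = NR.span (set (cols A))"
    using NR.col_space_eq[OF A] A unfolding NR.col_space_def mod_hom.im_def[OF L.mod_hom_axioms]
    by (auto simp: module_vec_simps)
  have ker: "L.kerT = mat_kernel A"
    unfolding mod_hom.ker_def[OF L.mod_hom_axioms] mat_kernel_def using A
    by (auto simp: module_vec_simps)
  have "vectorspace.dim class_ring (NR.vs L.imT) + vectorspace.dim class_ring (NC.vs L.kerT) = NC.dim"
    by (rule L.rank_nullity) simp
  then show ?thesis unfolding im ker NR.rank_def NC.dim_is_n kernel_dim_def using A by simp
qed



definition inv_pair :: "nat \<Rightarrow> 'k::field mat \<Rightarrow> 'k mat \<Rightarrow> bool" where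
  "inv_pair m P P' \<longleftrightarrow> P \<in> carrier_mat m m \<and> P' \<in> carrier_mat m m \<and> P * P' = 1\<^sub>m m \<and> P' * P = 1\<^sub>m m"

lemma fbm: 
  "A1 \<in> carrier_mat nr1 n1 \<Longrightarrow> B1 \<in> carrier_mat nr1 n2 \<Longrightarrow> C1 \<in> carrier_mat nr2 n1 \<Longrightarrow> D1 \<in> carrier_mat nr2 n2 \<Longrightarrow>
   A2 \<in> carrier_mat n1 nc1 \<Longrightarrow> B2 \<in> carrier_mat n1 nc2 \<Longrightarrow> C2 \<in> carrier_mat n2 nc1 \<Longrightarrow> D2 \<in> carrier_mat n2 nc2 \<Longrightarrow>
   four_block_mat A1 B1 C1 D1 * four_block_mat A2 B2 C2 D2
  = four_block_mat (A1 * A2 + B1 * C2) (A1 * B2 + B1 * D2) (C1 * A2 + D1 * C2) (C1 * B2 + D1 * D2)"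
  by (rule mult_four_block_mat)

lemma uminus_zero_mat'[simp]: "- (0\<^sub>m nr nc :: 'a :: group_add mat) = 0\<^sub>m nr nc"
  by (intro eq_matI, auto)

lemma add_uminus_r_mat[simp]: "(A :: 'a :: group_add mat) + - A = 0\<^sub>m (dim_row A) (dim_col A)"
  by (intro eq_matI, auto)

lemma sq_mult_carrier: "A \<in> carrier_mat n n \<Longrightarrow> B \<in> carrier_mat n n \<Longrightarrow> A * B \<in> carrier_mat n n"
  by simp

lemma sq_assoc: "A \<in> carrier_mat n n \<Longrightarrow> B \<in> carrier_mat n n \<Longrightarrow> C \<in> carrier_mat n n \<Longrightarrow> A * B * C = A * (B * C)"
  by (rule assoc_mult_mat)

lemmas sq_simps = sq_mult_carrier sq_assoc

lemma inv_pair_one: "inv_pair m (1\<^sub>m m) (1\<^sub>m m)"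
  unfolding inv_pair_def by simp

lemma inv_pair_sym: "inv_pair m P P' \<Longrightarrow> inv_pair m P' P"
  unfolding inv_pair_def by auto

lemma inv_pair_mult:
  assumes "inv_pair m P P'" "inv_pair m Q Q'"
  shows "inv_pair m (P * Q) (Q' * P')"
proof -
  from assms have c: "P \<in> carrier_mat m m" "P' \<in> carrier_mat m m" "Q \<in> carrier_mat m m" "Q' \<in> carrier_mat m m"
    and e: "P * P' = 1\<^sub>m m" "P' * P = 1\<^sub>m m" "Q * Q' = 1\<^sub>m m" "Q' * Q = 1\<^sub>m m"
    unfolding inv_pair_def by auto
  have "P * Q * (Q' * P') = P * (Q * Q') * P'" using c by (simp add: assoc_mult_mat[of _ m m _ m _ m])
  also have "\<dots> = 1\<^sub>m m" using c e by simp
  finally have 1: "P * Q * (Q' * P') = 1\<^sub>m m" .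
  have "Q' * P' * (P * Q) = Q' * (P' * P) * Q" using c by (simp add: assoc_mult_mat[of _ m m _ m _ m])
  also have "\<dots> = 1\<^sub>m m" using c e by simp
  finally have 2: "Q' * P' * (P * Q) = 1\<^sub>m m" .
  show ?thesis unfolding inv_pair_def using 1 2 c by auto
qed

lemma inv_pair_diag:
  assumes "inv_pair p X X'" "inv_pair q Z Z'"
  shows "inv_pair (p + q) (four_block_mat X (0\<^sub>m p q) (0\<^sub>m q p) Z) (four_block_mat X' (0\<^sub>m p q) (0\<^sub>m q p) Z')"
proof -
  from assms have c: "X \<in> carrier_mat p p" "X' \<in> carrier_mat p p" "Z \<in> carrier_mat q q" "Z' \<in> carrier_mat q q"
    and e: "X * X' = 1\<^sub>m p" "X' * X = 1\<^sub>m p" "Z * Z' = 1\<^sub>m q" "Z' * Z = 1\<^sub>m q"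
    unfolding inv_pair_def by auto
  show ?thesis unfolding inv_pair_def
    using c e by (simp add: fbm[of _ p p _ q _ q _ _ p _ q])
qed

lemma inv_pair_lower:
  assumes "inv_pair p X X'" and c: "C \<in> carrier_mat q p"
  shows "inv_pair (p + q) (four_block_mat X (0\<^sub>m p q) C (1\<^sub>m q)) (four_block_mat X' (0\<^sub>m p q) (- (C * X')) (1\<^sub>m q))"
proof -
  from assms have cc: "X \<in> carrier_mat p p" "X' \<in> carrier_mat p p"
    and e: "X * X' = 1\<^sub>m p" "X' * X = 1\<^sub>m p"
    unfolding inv_pair_def by auto
  have a: "- (C * X') * X = - C" using cc c e by (simp add: assoc_mult_mat[of _ q p _ p _ p])
  show ?thesis unfolding inv_pair_def
    using c cc e a mult_carrier_mat[OF c cc(2)] by (simp add: fbm[of _ p p _ q _ q _ _ p _ q])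
qed

lemma inv_pair_upper:
  assumes c: "Y \<in> carrier_mat p q"
  shows "inv_pair (p + q) (four_block_mat (1\<^sub>m p) Y (0\<^sub>m q p) (1\<^sub>m q)) (four_block_mat (1\<^sub>m p) (- Y) (0\<^sub>m q p) (1\<^sub>m q))"
  unfolding inv_pair_def
  using c by (simp add: fbm[of _ p p _ q _ q _ _ p _ q])




definition Dm :: "nat \<Rightarrow> nat \<Rightarrow> 'k::field mat" where
  "Dm n d = four_block_mat (1\<^sub>m n) (0\<^sub>m n d) (0\<^sub>m d n) (0\<^sub>m d d)"

lemma Dm_carrier[simp]: "Dm n d \<in> carrier_mat (n + d) (n + d)"
  unfolding Dm_def by simp

lemma Dm_dims: "dim_row (Dm n d) = n + d" "dim_col (Dm n d) = n + d"
  unfolding Dm_def by simp_all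

lemma Dm_Suc: "four_block_mat (1\<^sub>m 1) (0\<^sub>m 1 (n+d)) (0\<^sub>m (n+d) 1) (Dm n d) = (Dm (Suc n) d :: 'k::field mat)"
  by (rule eq_matI) (auto simp: Dm_def)

lemma Dm_zero: "(Dm 0 m :: 'k::field mat) = 0\<^sub>m m m"
  by (rule eq_matI) (auto simp: Dm_def)

lemma swap_entry:
  fixes A :: "'k::field mat"
  assumes A: "A \<in> carrier_mat N N" and i: "i < N" and j: "j < N"
  shows "(swaprows_mat N 0 i * A * swaprows_mat N 0 j) $$ (0,0) = A $$ (i,j)"
proof -
  have N: "0 < N" using i by auto
  have 1: "swaprows_mat N 0 i * A = swaprows 0 i A"
    by (rule swaprows_mat[symmetric, OF A N i])
  let ?X = "swaprows 0 i A"
  have X: "?X \<in> carrier_mat N N" using A by auto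
  have "(?X * swaprows_mat N 0 j) $$ (0,0) = (\<Sum>t = 0..<N. ?X $$ (0,t) * swaprows_mat N 0 j $$ (t,0))"
    using X N by (simp add: scalar_prod_def)
  also have "\<dots> = (\<Sum>t = 0..<N. if t = j then ?X $$ (0,t) else 0)"
    by (rule sum.cong, auto simp: N)
  also have "\<dots> = ?X $$ (0,j)" using j by simp
  also have "\<dots> = A $$ (i,j)" using A N j by auto
  finally show ?thesis unfolding 1 .
qed

lemma one_by_one_inv:
  fixes a :: "'k::field"
  assumes "a \<noteq> 0"
  shows "inv_pair 1 (mat 1 1 (\<lambda>_. a)) (mat 1 1 (\<lambda>_. inverse a))"
  unfolding inv_pair_def using assms
  by (auto intro!: eq_matI simp: scalar_prod_def)



lemma assoc7:
  fixes A :: "'a::field mat"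
  assumes "A \<in> carrier_mat n n" "B \<in> carrier_mat n n" "P \<in> carrier_mat n n" "D \<in> carrier_mat n n"
    "Q \<in> carrier_mat n n" "C \<in> carrier_mat n n" "E \<in> carrier_mat n n"
  shows "A * (B * (P * D * Q) * C) * E = (A * B * P) * D * (Q * C * E)"
  using assms by (simp add: sq_assoc[where n=n] sq_mult_carrier)

lemma fb_diag_mult:
  fixes A :: "'a::field mat"
  assumes "A \<in> carrier_mat p p" "A' \<in> carrier_mat p p" "X \<in> carrier_mat q q" "Y \<in> carrier_mat q q"
  shows "four_block_mat A (0\<^sub>m p q) (0\<^sub>m q p) X * four_block_mat A' (0\<^sub>m p q) (0\<^sub>m q p) Y
       = four_block_mat (A * A') (0\<^sub>m p q) (0\<^sub>m q p) (X * Y)"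
  using assms by (simp add: fbm[of _ p p _ q _ q _ _ p _ q])



lemma NF:
  fixes A :: "'k::field mat"
  assumes "A \<in> carrier_mat m m"
  shows "\<exists>P P' Q Q' n d. n + d = m \<and> inv_pair m P P' \<and> inv_pair m Q Q' \<and> A = P * Dm n d * Q"
  using assms
proof (induction m arbitrary: A)
  case 0
  have "A = 1\<^sub>m 0 * Dm 0 0 * 1\<^sub>m 0" using 0 by (intro eq_matI) auto
  then show ?case using inv_pair_one[of 0] by blast
next
  case (Suc m)
  note A = Suc.prems
  show ?case
  proof (cases "A = 0\<^sub>m (Suc m) (Suc m)")
    case True
    have "A = 1\<^sub>m (Suc m) * Dm 0 (Suc m) * 1\<^sub>m (Suc m)" unfolding Dm_zero True by simp
    moreover have "0 + Suc m = Suc m" by simp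
    ultimately show ?thesis using inv_pair_one[of "Suc m"] by blast
  next
    case False
    then obtain i j where i: "i < Suc m" and j: "j < Suc m" and aij: "A $$ (i,j) \<noteq> 0"
      using A by (metis eq_matI carrier_matD index_zero_mat(1,2,3))
    define S1 :: "'k mat" where "S1 = swaprows_mat (Suc m) 0 i"
    define S2 :: "'k mat" where "S2 = swaprows_mat (Suc m) 0 j"
    have S1: "inv_pair (Suc m) S1 S1" unfolding S1_def inv_pair_def using swaprows_mat_inv[OF _ i] by auto
    have S2: "inv_pair (Suc m) S2 S2" unfolding S2_def inv_pair_def using swaprows_mat_inv[OF _ j] by auto
    define B where "B = S1 * A * S2"
    have Bc: "B \<in> carrier_mat (Suc m) (Suc m)" unfolding B_def S1_def S2_def using A by auto
    define a where "a = B $$ (0,0)"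
    have a0: "a \<noteq> 0" unfolding a_def B_def S1_def S2_def swap_entry[OF A i j] by (rule aij)
    obtain \<alpha> b c B' where sb: "split_block B 1 1 = (\<alpha>, b, c, B')" by (metis prod_cases4)
    note spl = split_block[OF sb, of m m]
    have \<alpha>c: "\<alpha> \<in> carrier_mat 1 1" and bc: "b \<in> carrier_mat 1 m" and cc: "c \<in> carrier_mat m 1"
      and B'c: "B' \<in> carrier_mat m m" and Beq: "B = four_block_mat \<alpha> b c B'"
      using spl Bc by auto
    have \<alpha>eq: "\<alpha> = mat 1 1 (\<lambda>_. a)"
    proof (rule eq_matI)
      fix i j assume "i < dim_row (mat 1 1 (\<lambda>_. a))" "j < dim_col (mat 1 1 (\<lambda>_. a))"
      then have "i = 0" "j = 0" by auto
      then show "\<alpha> $$ (i,j) = mat 1 1 (\<lambda>_. a) $$ (i,j)"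
        unfolding a_def Beq using \<alpha>c by auto
    qed (use \<alpha>c in auto)
    define \<alpha>' where "\<alpha>' = mat 1 1 (\<lambda>_. inverse a)"
    have \<alpha>inv: "inv_pair 1 \<alpha> \<alpha>'" unfolding \<alpha>eq \<alpha>'_def by (rule one_by_one_inv[OF a0])
    have \<alpha>'c: "\<alpha>' \<in> carrier_mat 1 1" unfolding \<alpha>'_def by simp
    have \<alpha>\<alpha>': "\<alpha>' * \<alpha> = 1\<^sub>m 1" "\<alpha> * \<alpha>' = 1\<^sub>m 1" using \<alpha>inv unfolding inv_pair_def by auto
    define Li where "Li = four_block_mat \<alpha> (0\<^sub>m 1 m) c (1\<^sub>m m)"
    define L where "L = four_block_mat \<alpha>' (0\<^sub>m 1 m) (- (c * \<alpha>')) (1\<^sub>m m)"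
    have LL: "inv_pair (Suc m) Li L" unfolding Li_def L_def using inv_pair_lower[OF \<alpha>inv cc] by simp
    define y where "y = \<alpha>' * b"
    have yc: "y \<in> carrier_mat 1 m" unfolding y_def using \<alpha>'c bc by simp
    define Ri where "Ri = four_block_mat (1\<^sub>m 1) y (0\<^sub>m m 1) (1\<^sub>m m)"
    define R where "R = four_block_mat (1\<^sub>m 1) (- y) (0\<^sub>m m 1) (1\<^sub>m m)"
    have RR: "inv_pair (Suc m) Ri R" unfolding Ri_def R_def using inv_pair_upper[OF yc] by simp
    define B'' where "B'' = B' + - (c * \<alpha>' * b)"
    have B''c: "B'' \<in> carrier_mat m m" unfolding B''_def using B'c cc \<alpha>'c bc by simp
    have LB: "L * B = four_block_mat (1\<^sub>m 1) y (0\<^sub>m m 1) B''"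
    proof -
      have "L * B = four_block_mat (\<alpha>' * \<alpha> + 0\<^sub>m 1 m * c) (\<alpha>' * b + 0\<^sub>m 1 m * B')
          (- (c * \<alpha>') * \<alpha> + 1\<^sub>m m * c) (- (c * \<alpha>') * b + 1\<^sub>m m * B')"
        unfolding L_def Beq
        by (rule fbm[OF \<alpha>'c _ _ _ \<alpha>c bc cc B'c]) (use cc \<alpha>'c in auto)
      also have "\<alpha>' * \<alpha> + 0\<^sub>m 1 m * c = 1\<^sub>m 1" using \<alpha>\<alpha>' cc by simp
      also have "\<alpha>' * b + 0\<^sub>m 1 m * B' = y" unfolding y_def using \<alpha>'c bc B'c by simp
      also have "- (c * \<alpha>') * \<alpha> + 1\<^sub>m m * c = 0\<^sub>m m 1"
      proof -
        have "c * \<alpha>' * \<alpha> = c" using cc \<alpha>'c \<alpha>c \<alpha>\<alpha>' by (simp add: assoc_mult_mat[of _ m 1 _ 1 _ 1])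
        then show ?thesis using cc \<alpha>'c \<alpha>c by (simp add: uminus_l_inv_mat)
      qed
      also have "- (c * \<alpha>') * b + 1\<^sub>m m * B' = B''" unfolding B''_def
        using cc \<alpha>'c bc B'c by (simp add: comm_add_mat[of _ m m])
      finally show ?thesis .
    qed
    have LBR: "L * B * R = four_block_mat (1\<^sub>m 1) (0\<^sub>m 1 m) (0\<^sub>m m 1) B''"
      unfolding LB R_def
      using yc B''c by (simp add: fbm[of _ 1 1 _ m _ m _ _ 1 _ m])
    obtain P P' Q Q' n d where nd: "n + d = m" and PP: "inv_pair m P P'" and QQ: "inv_pair m Q Q'"
      and B''eq: "B'' = P * Dm n d * Q"
      using Suc.IH[OF B''c] by blast
    define P1 where "P1 = four_block_mat (1\<^sub>m 1) (0\<^sub>m 1 m) (0\<^sub>m m 1) P"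
    define P1' where "P1' = four_block_mat (1\<^sub>m 1) (0\<^sub>m 1 m) (0\<^sub>m m 1) P'"
    define Q1 where "Q1 = four_block_mat (1\<^sub>m 1) (0\<^sub>m 1 m) (0\<^sub>m m 1) Q"
    define Q1' where "Q1' = four_block_mat (1\<^sub>m 1) (0\<^sub>m 1 m) (0\<^sub>m m 1) Q'"
    have PP1: "inv_pair (Suc m) P1 P1'" unfolding P1_def P1'_def using inv_pair_diag[OF inv_pair_one[of 1] PP] by simp
    have QQ1: "inv_pair (Suc m) Q1 Q1'" unfolding Q1_def Q1'_def using inv_pair_diag[OF inv_pair_one[of 1] QQ] by simp
    have Pc: "P \<in> carrier_mat m m" and Qc: "Q \<in> carrier_mat m m" using PP QQ unfolding inv_pair_def by auto
    have mid: "four_block_mat (1\<^sub>m 1) (0\<^sub>m 1 m) (0\<^sub>m m 1) B'' = P1 * Dm (Suc n) d * Q1"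
    proof -
      have Dmc: "(Dm n d :: 'k mat) \<in> carrier_mat m m" using Dm_carrier[of n d] nd by simp
      have "P1 * Dm (Suc n) d * Q1 = four_block_mat (1\<^sub>m 1 * 1\<^sub>m 1 * 1\<^sub>m 1) (0\<^sub>m 1 m) (0\<^sub>m m 1) (P * Dm n d * Q)"
        unfolding P1_def Q1_def Dm_Suc[symmetric] nd
        by (simp only: fb_diag_mult[OF one_carrier_mat one_carrier_mat Pc Dmc]
            fb_diag_mult[OF mult_carrier_mat[OF one_carrier_mat one_carrier_mat] one_carrier_mat mult_carrier_mat[OF Pc Dmc] Qc])
      then show ?thesis unfolding B''eq by simp
    qed
    have Lc: "L \<in> carrier_mat (Suc m) (Suc m)" and Lic: "Li \<in> carrier_mat (Suc m) (Suc m)"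
      and Rc: "R \<in> carrier_mat (Suc m) (Suc m)" and Ric: "Ri \<in> carrier_mat (Suc m) (Suc m)"
      and LiL: "Li * L = 1\<^sub>m (Suc m)" and RRi: "R * Ri = 1\<^sub>m (Suc m)"
      using LL RR unfolding inv_pair_def by auto
    have S1c: "S1 \<in> carrier_mat (Suc m) (Suc m)" and S2c: "S2 \<in> carrier_mat (Suc m) (Suc m)"
      and S11: "S1 * S1 = 1\<^sub>m (Suc m)" and S22: "S2 * S2 = 1\<^sub>m (Suc m)"
      using S1 S2 unfolding inv_pair_def by auto
    have Bexp: "B = Li * (L * B * R) * Ri"
    proof -
      have "Li * (L * B * R) * Ri = (Li * L) * B * (R * Ri)"
        using Lic Lc Bc Rc Ric by (simp add: assoc_mult_mat[of _ "Suc m" "Suc m" _ "Suc m" _ "Suc m"])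
      then show ?thesis using LiL RRi Bc by simp
    qed
    have Aexp: "A = S1 * B * S2"
    proof -
      have "S1 * B * S2 = (S1 * S1) * A * (S2 * S2)" unfolding B_def
        using S1c S2c A by (simp add: assoc_mult_mat[of _ "Suc m" "Suc m" _ "Suc m" _ "Suc m"])
      then show ?thesis using S11 S22 A by simp
    qed
    have "A = (S1 * Li * P1) * Dm (Suc n) d * (Q1 * Ri * S2)"
    proof -
      have P1c: "P1 \<in> carrier_mat (Suc m) (Suc m)" and Q1c: "Q1 \<in> carrier_mat (Suc m) (Suc m)"
        using PP1 QQ1 unfolding inv_pair_def by auto
      have Dc: "(Dm (Suc n) d :: 'k mat) \<in> carrier_mat (Suc m) (Suc m)" using Dm_carrier[of "Suc n" d] nd by simp
      have "A = S1 * (Li * (P1 * Dm (Suc n) d * Q1) * Ri) * S2" unfolding Aexp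
        by (subst Bexp) (simp only: LBR mid)
      also have "\<dots> = (S1 * Li * P1) * Dm (Suc n) d * (Q1 * Ri * S2)"
        using S1c Lic P1c Dc Q1c Ric S2c
        by (rule assoc7)
      finally show ?thesis .
    qed
    moreover have "inv_pair (Suc m) (S1 * Li * P1) (P1' * (L * S1))"
      by (rule inv_pair_mult[OF inv_pair_mult[OF S1 LL] PP1])
    moreover have "inv_pair (Suc m) (Q1 * Ri * S2) (S2 * (R * Q1'))"
      by (rule inv_pair_mult[OF inv_pair_mult[OF QQ1 RR] S2])
    moreover have "Suc n + d = Suc m" using nd by simp
    ultimately show ?thesis by blast
  qed
qed




lemma fb_inj1:
  assumes "four_block_mat A B C D = four_block_mat A' B' C' D'"
    and "A \<in> carrier_mat p q" "A' \<in> carrier_mat p q" "D \<in> carrier_mat r s" "D' \<in> carrier_mat r s"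
  shows "A = A'"
proof (rule eq_matI)
  fix i j assume ij: "i < dim_row A'" "j < dim_col A'"
  have "four_block_mat A B C D $$ (i,j) = four_block_mat A' B' C' D' $$ (i,j)" using assms(1) by simp
  then show "A $$ (i,j) = A' $$ (i,j)" using ij assms(2-5) by auto
qed (use assms in auto)

lemma sq_assoc4: 
  fixes A :: "'a::field mat"
  assumes "A \<in> carrier_mat n n" "B \<in> carrier_mat n n" "C \<in> carrier_mat n n" "D \<in> carrier_mat n n"
  shows "A * B * C * D = A * (B * C) * D" "A * B * (C * D) = A * (B * C) * D"
  using assms by (simp_all add: sq_assoc[where n=n] sq_mult_carrier)

lemma Fitting:
  fixes E :: "'k::field mat"
  assumes Ec: "E \<in> carrier_mat m m" and CC: "inv_pair m C C'" and EC: "E = C * E * E"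
  shows "\<exists>S S' U U' n d. n + d = m \<and> inv_pair m S S' \<and> inv_pair n U U' \<and>
           E * S = S * four_block_mat U (0\<^sub>m n d) (0\<^sub>m d n) (0\<^sub>m d d)"
proof -
  obtain P P' Q Q' n d where nd: "n + d = m" and PP: "inv_pair m P P'" and QQ: "inv_pair m Q Q'"
    and Eeq: "E = P * Dm n d * Q"
    using NF[OF Ec] by blast
  define D :: "'k mat" where "D = Dm n d"
  have Dc: "D \<in> carrier_mat m m" unfolding D_def using Dm_carrier[of n d] nd by simp
  have Pc: "P \<in> carrier_mat m m" "P' \<in> carrier_mat m m" and PP1: "P * P' = 1\<^sub>m m" "P' * P = 1\<^sub>m m"
    using PP unfolding inv_pair_def by auto
  have Qc: "Q \<in> carrier_mat m m" "Q' \<in> carrier_mat m m" and QQ1: "Q * Q' = 1\<^sub>m m" "Q' * Q = 1\<^sub>m m"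
    using QQ unfolding inv_pair_def by auto
  have Cc: "C \<in> carrier_mat m m" "C' \<in> carrier_mat m m"
    using CC unfolding inv_pair_def by auto
  define G where "G = Q * P"
  have Gc: "G \<in> carrier_mat m m" unfolding G_def using Pc Qc by simp
  obtain G1 G2 G3 G4 where sb: "split_block G n n = (G1, G2, G3, G4)" by (metis prod_cases4)
  note spl = split_block[OF sb, of d d]
  have G1c: "G1 \<in> carrier_mat n n" and G2c: "G2 \<in> carrier_mat n d" and G3c: "G3 \<in> carrier_mat d n"
    and G4c: "G4 \<in> carrier_mat d d" and Geq: "G = four_block_mat G1 G2 G3 G4"
    using spl Gc nd by auto
  have DG: "D * G = four_block_mat G1 G2 (0\<^sub>m d n) (0\<^sub>m d d)"
    unfolding D_def Dm_def Geq
    using G1c G2c G3c G4c by (simp add: fbm[of _ n n _ d _ d _ _ n _ d])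
  have DGD: "D * G * D = four_block_mat G1 (0\<^sub>m n d) (0\<^sub>m d n) (0\<^sub>m d d)"
    unfolding DG unfolding D_def Dm_def
    using G1c G2c by (simp add: fbm[of _ n n _ d _ d _ _ n _ d])
  define X where "X = P' * C * P"
  have Xc: "X \<in> carrier_mat m m" unfolding X_def using Pc Cc by simp
  have DX: "D = X * (D * G * D)"
  proof -
    have "P' * E * Q' = P' * P * D * (Q * Q')" unfolding Eeq D_def
      using Pc Qc Dc[unfolded D_def] by (simp add: sq_assoc[where n=m] sq_mult_carrier)
    also have "\<dots> = D" using PP1 QQ1 Dc by simp
    finally have 1: "P' * E * Q' = D" .
    have "P' * (C * E * E) * Q' = (P' * C * P) * (D * (Q * P) * D) * (Q * Q')"
      unfolding Eeq D_def using Pc Qc Cc Dc[unfolded D_def] by (simp add: sq_assoc[where n=m] sq_mult_carrier)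
    also have "\<dots> = X * (D * G * D)" unfolding X_def G_def using QQ1 Pc Qc Cc Dc
      by (simp add: sq_assoc[where n=m] sq_mult_carrier)
    finally have 2: "P' * (C * E * E) * Q' = X * (D * G * D)" .
    show ?thesis using 1 2 EC by simp
  qed
  obtain X1 X2 X3 X4 where sbx: "split_block X n n = (X1, X2, X3, X4)" by (metis prod_cases4)
  note splx = split_block[OF sbx, of d d]
  have X1c: "X1 \<in> carrier_mat n n" and X2c: "X2 \<in> carrier_mat n d" and X3c: "X3 \<in> carrier_mat d n"
    and X4c: "X4 \<in> carrier_mat d d" and Xeq: "X = four_block_mat X1 X2 X3 X4"
    using splx Xc nd by auto
  have "X * (D * G * D) = four_block_mat (X1 * G1) (0\<^sub>m n d) (X3 * G1) (0\<^sub>m d d)"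
    unfolding DGD Xeq using X1c X2c X3c X4c G1c
    by (simp add: fbm[of _ n n _ d _ d _ _ n _ d])
  then have "four_block_mat (1\<^sub>m n) (0\<^sub>m n d) (0\<^sub>m d n) (0\<^sub>m d d) = four_block_mat (X1 * G1) (0\<^sub>m n d) (X3 * G1) (0\<^sub>m d d)"
    using DX unfolding D_def Dm_def by simp
  then have X1G1: "1\<^sub>m n = X1 * G1"
    by (rule fb_inj1) (use X1c G1c in auto)
  have G1X1: "G1 * X1 = 1\<^sub>m n" using mat_mult_left_right_inverse[OF X1c G1c X1G1[symmetric]] .
  have UU: "inv_pair n G1 X1" unfolding inv_pair_def using G1c X1c G1X1 X1G1 by auto
  define Y where "Y = - (X1 * G2)"
  have Yc: "Y \<in> carrier_mat n d" unfolding Y_def using X1c G2c by simp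
  define T where "T = four_block_mat (1\<^sub>m n) Y (0\<^sub>m d n) (1\<^sub>m d)"
  define T' where "T' = four_block_mat (1\<^sub>m n) (- Y) (0\<^sub>m d n) (1\<^sub>m d)"
  have TT: "inv_pair m T T'" unfolding T_def T'_def using inv_pair_upper[OF Yc] nd by simp
  have Tc: "T \<in> carrier_mat m m" using TT unfolding inv_pair_def by auto
  define J where "J = four_block_mat G1 (0\<^sub>m n d) (0\<^sub>m d n) (0\<^sub>m d d)"
  have Jc: "J \<in> carrier_mat m m" unfolding J_def using G1c nd by auto
  have G1Y: "G1 * Y + G2 = 0\<^sub>m n d"
  proof -
    have "G1 * Y = - (G1 * X1 * G2)" unfolding Y_def using G1c X1c G2c
      by (simp add: assoc_mult_mat[of _ n n _ n _ d])
    also have "\<dots> = - G2" using G1X1 G2c by simp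
    finally show ?thesis using G2c by simp
  qed
  have DGT: "D * G * T = J"
    unfolding DG T_def J_def using G1c G2c Yc G1Y
    by (simp add: fbm[of _ n n _ d _ d _ _ n _ d])
  have TJ: "T * J = J"
    unfolding T_def J_def using G1c Yc
    by (simp add: fbm[of _ n n _ d _ d _ _ n _ d])
  have "E * (P * T) = P * (D * G * T)"
    unfolding Eeq G_def D_def[symmetric] using Pc Qc Dc Tc
    by (simp add: sq_assoc[where n=m] sq_mult_carrier)
  also have "\<dots> = P * (T * J)" unfolding DGT TJ ..
  also have "\<dots> = P * T * J" using Pc Tc Jc by (simp add: sq_assoc[where n=m])
  finally have "E * (P * T) = P * T * J" .
  moreover have "inv_pair m (P * T) (T' * P')" by (rule inv_pair_mult[OF PP TT])
  ultimately show ?thesis using nd UU unfolding J_def by blast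
qed




context
  fixes P :: "'a set" and leq :: "'a \<Rightarrow> 'a \<Rightarrow> bool"
  assumes po: "partial_order_on' P leq"
begin

lemma po_refl: "x \<in> P \<Longrightarrow> leq x x"
proof -
  assume a: "x \<in> P"
  have "\<forall>x\<in>P. leq x x" using po unfolding partial_order_on'_def by (rule conjunct1)
  then show ?thesis using a by blast
qed

lemma po_antisym: "x \<in> P \<Longrightarrow> y \<in> P \<Longrightarrow> leq x y \<Longrightarrow> leq y x \<Longrightarrow> x = y"
proof -
  assume a: "x \<in> P" "y \<in> P" "leq x y" "leq y x"
  have "\<forall>x\<in>P. \<forall>y\<in>P. leq x y \<and> leq y x \<longrightarrow> x = y" using po unfolding partial_order_on'_def by (rule conjunct1[OF conjunct2])
  then show ?thesis using a by blast
qed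

lemma po_trans: "x \<in> P \<Longrightarrow> y \<in> P \<Longrightarrow> z \<in> P \<Longrightarrow> leq x y \<Longrightarrow> leq y z \<Longrightarrow> leq x z"
proof -
  assume a: "x \<in> P" "y \<in> P" "z \<in> P" "leq x y" "leq y z"
  have "\<forall>x\<in>P. \<forall>y\<in>P. \<forall>z\<in>P. leq x y \<and> leq y z \<longrightarrow> leq x z" using po unfolding partial_order_on'_def by (rule conjunct2[OF conjunct2])
  then show "leq x z" using a by blast
qed

lemma strict_trans1:
  assumes "x \<in> P" "y \<in> P" "z \<in> P" "strict leq x y" "leq y z" shows "strict leq x z"
proof -
  have xy: "leq x y" "x \<noteq> y" using assms(4) unfolding strict_def by auto
  have "leq x z" using po_trans[OF assms(1-3) xy(1) assms(5)] .
  moreover have "x \<noteq> z"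
  proof
    assume "x = z"
    then have "leq y x" using assms(5) by simp
    then show False using po_antisym[OF assms(1,2) xy(1)] xy(2) by simp
  qed
  ultimately show ?thesis unfolding strict_def by simp
qed

lemma strict_trans2:
  assumes "x \<in> P" "y \<in> P" "z \<in> P" "leq x y" "strict leq y z" shows "strict leq x z"
proof -
  have yz: "leq y z" "y \<noteq> z" using assms(5) unfolding strict_def by auto
  have "leq x z" using po_trans[OF assms(1-3) assms(4) yz(1)] .
  moreover have "x \<noteq> z"
  proof
    assume "x = z"
    then have "leq z y" using assms(4) by simp
    then show False using po_antisym[OF assms(2,3) yz(1)] yz(2) by simp
  qed
  ultimately show ?thesis unfolding strict_def by simp
qed

lemma above_succ:
  assumes fin: "finite P" and ht: "hasse_rooted_tree P leq r" and cs: "covers P leq r s"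
    and us: "\<And>s'. covers P leq r s' \<Longrightarrow> s' = s"
  shows "x \<in> P \<Longrightarrow> x \<noteq> r \<Longrightarrow> leq s x"
proof (induction "card {z \<in> P. strict leq z x}" arbitrary: x rule: less_induct)
  case less
  from ht less.prems obtain y where cy: "covers P leq y x" unfolding hasse_rooted_tree_def by blast
  have yP: "y \<in> P" and yx: "strict leq y x" using cy unfolding covers_def by auto
  show ?case
  proof (cases "y = r")
    case True
    then have "x = s" using us cy by blast
    then show ?thesis using po_refl less.prems by simp
  next
    case False
    have sub: "{z \<in> P. strict leq z y} \<subset> {z \<in> P. strict leq z x}"
    proof
      show "{z \<in> P. strict leq z y} \<subseteq> {z \<in> P. strict leq z x}"
      proof
        fix z assume "z \<in> {z \<in> P. strict leq z y}"
        then have "z \<in> P" "strict leq z y" by auto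
        then show "z \<in> {z \<in> P. strict leq z x}"
          using strict_trans1[OF _ yP less.prems(1)] yx unfolding strict_def by auto
      qed
      have "y \<notin> {z \<in> P. strict leq z y}" unfolding strict_def by auto
      moreover have "y \<in> {z \<in> P. strict leq z x}" using yP yx by auto
      ultimately show "{z \<in> P. strict leq z y} \<noteq> {z \<in> P. strict leq z x}" by blast
    qed
    have "card {z \<in> P. strict leq z y} < card {z \<in> P. strict leq z x}"
      by (rule psubset_card_mono[OF _ sub]) (use fin in auto)
    then have "leq s y" by (rule less.hyps[OF _ yP False])
    moreover have sP: "s \<in> P" using cs unfolding covers_def by auto
    moreover have "leq y x" using yx unfolding strict_def by simp
    ultimately show ?thesis using po_trans[OF sP yP less.prems(1)] by simp
  qed
qed

end


context
  fixes P :: "'a set" and leq :: "'a \<Rightarrow> 'a \<Rightarrow> bool"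
  assumes po: "partial_order_on' P leq"
begin

lemma root_le:
  assumes fin: "finite P" and ht: "hasse_rooted_tree P leq r" and cs: "covers P leq r s"
    and us: "\<And>s'. covers P leq r s' \<Longrightarrow> s' = s" and xP: "x \<in> P"
  shows "leq r x"
proof (cases "x = r")
  case True
  then show ?thesis using po_refl[OF po xP] by simp
next
  case False
  have "leq s x" using above_succ[OF po fin ht cs us xP False] .
  moreover have "leq r s" "r \<in> P" "s \<in> P" using cs unfolding covers_def strict_def by auto
  ultimately show ?thesis using po_trans[OF po _ _ xP] by blast
qed

lemma chain3:
  assumes fin: "finite P" and ht: "hasse_rooted_tree P leq r" and cs: "covers P leq r s"
    and us: "\<And>s'. covers P leq r s' \<Longrightarrow> s' = s" and cl: "comp_length P leq \<ge> 3"
  shows "\<exists>t w. t \<in> P \<and> w \<in> P \<and> strict leq s t \<and> strict leq t w"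
proof -
  define SS where "SS = {n. \<exists>c :: nat \<Rightarrow> 'a. \<forall>i<n. covers P leq (c i) (c (Suc i))}"
  have "\<exists>n\<in>SS. n \<ge> 3"
  proof (rule ccontr)
    assume "\<not> (\<exists>n\<in>SS. n \<ge> 3)"
    then have sub: "SS \<subseteq> {..<3}" by auto
    then have finSS: "finite SS" using finite_subset by blast
    have "0 \<in> SS" unfolding SS_def by auto
    then have "Max SS < 3" using finSS sub by (metis Max_in empty_iff lessThan_iff subsetD)
    then show False using cl unfolding comp_length_def SS_def by simp
  qed
  then obtain n c where n3: "n \<ge> 3" and cc: "\<forall>i<n. covers P leq (c i) (c (Suc i))"
    unfolding SS_def by blast
  have c0: "covers P leq (c 0) (c 1)" and c1: "covers P leq (c 1) (c 2)" and c2: "covers P leq (c 2) (c 3)"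
    using cc n3 by (auto simp: numeral_eq_Suc)
  have P0: "c 0 \<in> P" and P1: "c 1 \<in> P" and P2: "c 2 \<in> P" and P3: "c 3 \<in> P"
    and s01: "strict leq (c 0) (c 1)" and s12: "strict leq (c 1) (c 2)" and s23: "strict leq (c 2) (c 3)"
    using c0 c1 c2 unfolding covers_def by auto
  have rmin: "\<not> (\<exists>y\<in>P. strict leq y r)" using ht unfolding hasse_rooted_tree_def by blast
  have "c 1 \<noteq> r" using rmin P0 s01 by blast
  then have "leq s (c 1)" using above_succ[OF po fin ht cs us P1] by blast
  moreover have sP: "s \<in> P" using cs unfolding covers_def by auto
  ultimately have "strict leq s (c 2)" using strict_trans2[OF po sP P1 P2] s12 by blast
  then show ?thesis using P2 P3 s23 by blast
qed

end

lemma invertible_inv_pair: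
  fixes A :: "'k::field mat"
  assumes "invertible_mat A" "A \<in> carrier_mat m m"
  shows "\<exists>B. inv_pair m A B"
proof -
  from assms obtain B where AB: "A * B = 1\<^sub>m (dim_row A)" and BA: "B * A = 1\<^sub>m (dim_row B)"
    unfolding invertible_mat_def inverts_mat_def by blast
  have dA: "dim_row A = m" "dim_col A = m" using assms by auto
  have "dim_col B = m" using AB dA by (metis index_mult_mat(3) index_one_mat(3))
  moreover have "dim_row B = m" using BA dA by (metis index_mult_mat(3) index_one_mat(3))
  ultimately have "B \<in> carrier_mat m m" by auto
  then show ?thesis using AB BA dA unfolding inv_pair_def using assms(2) by (intro exI[of _ B]) auto
qed

lemma inv_pair_invertible: "inv_pair m A B \<Longrightarrow> invertible_mat A"
  unfolding inv_pair_def invertible_mat_def inverts_mat_def square_mat.simps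
  by (intro conjI exI[of _ B]) auto

lemma const_mod_simps[simp]: "fst (const_mod :: ('a, 'k::field) pmod) x = 1" "snd (const_mod :: ('a, 'k::field) pmod) x y = 1\<^sub>m 1"
  unfolding const_mod_def by simp_all

lemma S_mod_simps[simp]: "fst (S_mod :: ('a, 'k::field) pmod) x = 1"
  "snd (S_mod :: ('a, 'k::field) pmod) x y = (if x = y then 1\<^sub>m 1 else 0\<^sub>m 1 1)"
  unfolding S_mod_def by simp_all

lemma pmod_sum_simps[simp]: "fst (pmod_sum M N) x = fst M x + fst N x"
  "snd (pmod_sum M N) x y = four_block_mat (snd M x y) (0\<^sub>m (fst M y) (fst N x))
                           (0\<^sub>m (fst N y) (fst M x)) (snd N x y)"
  unfolding pmod_sum_def by simp_all

lemma pmod_zero_simps[simp]: "fst pmod_zero x = 0" "snd pmod_zero x y = 0\<^sub>m 0 0"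
  unfolding pmod_zero_def by simp_all

lemma pow_const_fst[simp]: "fst (pmod_pow (const_mod :: ('a, 'k::field) pmod) n) x = n"
  by (induction n) auto

lemma pow_S_fst[simp]: "fst (pmod_pow (S_mod :: ('a, 'k::field) pmod) n) x = n"
  by (induction n) auto

lemma pow_const_snd: "snd (pmod_pow (const_mod :: ('a, 'k::field) pmod) n) x y = 1\<^sub>m n"
proof (induction n)
  case 0
  then show ?case by (auto intro!: eq_matI)
next
  case (Suc n)
  then show ?case using four_block_one_mat[of 1 n] by simp
qed

lemma pow_S_snd: "snd (pmod_pow (S_mod :: ('a, 'k::field) pmod) d) x y = (if x = y then 1\<^sub>m d else 0\<^sub>m d d)"
proof (induction d)
  case 0
  then show ?case by (auto intro!: eq_matI)
next
  case (Suc d)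
  then show ?case using four_block_one_mat[of 1 d] four_block_zero_mat[of 1 1 d d] by simp
qed

lemma N_fst: "fst (pmod_sum (pmod_pow (const_mod :: ('a, 'k::field) pmod) n) (pmod_pow S_mod d)) x = n + d"
  by simp

lemma N_snd: "snd (pmod_sum (pmod_pow (const_mod :: ('a, 'k::field) pmod) n) (pmod_pow S_mod d)) x y
   = (if x = y then 1\<^sub>m (n + d) else Dm n d)"
  unfolding Dm_def by (simp add: pow_const_snd pow_S_snd)

lemma kernel_dim_zero: "kernel.dim d (0\<^sub>m d d :: 'k::field mat) = d"
proof -
  have "mat_kernel (0\<^sub>m d d :: 'k mat) = carrier_vec d"
    unfolding mat_kernel_def by auto
  moreover have "(module_vec TYPE('k) d)\<lparr>carrier := carrier_vec d\<rparr> = module_vec TYPE('k) d"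
    unfolding module_vec_def by simp
  ultimately show ?thesis using vec_space.dim_is_n[of d, where 'a='k] by simp
qed

lemma kernel_dim_Dm: "kernel_dim (Dm n d :: 'k::field mat) = d"
proof -
  have "kernel.dim (n + d) (Dm n d :: 'k mat) = kernel.dim n (1\<^sub>m n :: 'k mat) + kernel.dim d (0\<^sub>m d d :: 'k mat)"
    by (rule kernel_four_block_0_mat[OF Dm_def]) auto
  then show ?thesis unfolding kernel_dim_def using kernel_one_mat(1)[of n, where 'a='k] kernel_dim_zero[of d, where 'k='k]
    by (simp add: Dm_dims)
qed

lemma kernel_dim_equiv:
  fixes A :: "'k::field mat"
  assumes X: "inv_pair m X X'" and Y: "inv_pair m Y Y'" and A: "A \<in> carrier_mat m m"
  shows "kernel_dim (X * A * Y) = kernel_dim A"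
proof -
  have c: "X \<in> carrier_mat m m" "X' \<in> carrier_mat m m" "Y \<in> carrier_mat m m" "Y' \<in> carrier_mat m m"
    "X' * X = 1\<^sub>m m" "Y * Y' = 1\<^sub>m m"
    using X Y unfolding inv_pair_def by auto
  have e: "X * A * Y = X * (A * Y)" using c A by (simp add: assoc_mult_mat[of _ m m _ m _ m])
  have k: "mat_kernel (X * (A * Y)) = mat_kernel (A * Y)"
    by (rule mat_kernel_mult_eq[of _ m m]) (use c A in auto)
  have "kernel_dim (X * A * Y) = kernel.dim m (A * Y)"
    unfolding kernel_dim_def e k using c A by simp
  also have "\<dots> = kernel.dim m A"
    by (rule mat_kernel_dim_mult_eq_right[OF A c(3) c(4) c(6)])
  finally show ?thesis unfolding kernel_dim_def using A by simp
qed

lemma rank_equiv: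
  fixes A :: "'k::field mat"
  assumes X: "inv_pair m X X'" and Y: "inv_pair m Y Y'" and A: "A \<in> carrier_mat m m"
  shows "mat_rank (X * A * Y) = m - kernel_dim A"
proof -
  have c: "X \<in> carrier_mat m m" "Y \<in> carrier_mat m m" using X Y unfolding inv_pair_def by auto
  have XAY: "X * A * Y \<in> carrier_mat m m" using c A by simp
  have "vec_space.rank m (X * A * Y) + kernel_dim (X * A * Y) = m" by (rule rank_nullity_mat[OF XAY])
  moreover have "dim_row (X * A * Y) = m" using c by simp
  ultimately show ?thesis unfolding mat_rank_def kernel_dim_equiv[OF X Y A] by simp
qed

lemma inv_pair_cancel:
  assumes "inv_pair m P P'" "A \<in> carrier_mat m k"
  shows "P' * (P * A) = A" "P * (P' * A) = A"
proof -
  have c: "P \<in> carrier_mat m m" "P' \<in> carrier_mat m m" "P * P' = 1\<^sub>m m" "P' * P = 1\<^sub>m m"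
    using assms(1) unfolding inv_pair_def by auto
  have "P' * (P * A) = (P' * P) * A" using c assms(2) by (intro assoc_mult_mat[symmetric, of _ m m _ m _ k]) auto
  then show "P' * (P * A) = A" using c assms(2) by simp
  have "P * (P' * A) = (P * P') * A" using c assms(2) by (intro assoc_mult_mat[symmetric, of _ m m _ m _ k]) auto
  then show "P * (P' * A) = A" using c assms(2) by simp
qed

theorem theorem4p9:
  fixes P :: "'a set" and leq :: "'a \<Rightarrow> 'a \<Rightarrow> bool" and r :: 'a
    and M :: "('a, 'k::field) pmod"
  assumes "finite P"
    and "partial_order_on' P leq"
    and "comp_length P leq \<ge> 3"
    and "hasse_rooted_tree P leq r"
    and "\<exists>!s. covers P leq r s"
    and "is_pmod P leq M"
    and "pmod_iso (G1_carrier P leq) (G1_le leq) (pullback d0 M) (pullback d1 M)"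
  shows "\<exists>n d. pmod_iso P leq M (pmod_sum (pmod_pow const_mod n) (pmod_pow S_mod d))
           \<and> (\<forall>x\<in>P. \<forall>y\<in>P. strict leq x y \<longrightarrow> n = mat_rank (snd M x y))
           \<and> (\<forall>x\<in>P. \<forall>y\<in>P. (\<exists>z\<in>P. strict leq x z) \<and> strict leq x y
                 \<longrightarrow> d = kernel_dim (snd M x y))"
proof -
  note fin = assms(1) and po = assms(2) and cl = assms(3) and ht = assms(4) and pm = assms(6)
    and iso = assms(7)
  obtain s where cs: "covers P leq r s" using assms(5) by blast
  have us: "\<And>s'. covers P leq r s' \<Longrightarrow> s' = s" using assms(5) cs by blast
  have rP: "r \<in> P" and sP: "s \<in> P" and rs: "strict leq r s" using cs unfolding covers_def by auto
  have above: "\<And>x. x \<in> P \<Longrightarrow> x \<noteq> r \<Longrightarrow> leq s x" using above_succ[OF po fin ht cs us] by blast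
  have rmin: "\<And>y. y \<in> P \<Longrightarrow> \<not> strict leq y r"
  proof -
    fix y assume "y \<in> P"
    have "\<not> (\<exists>y\<in>P. strict leq y r)" using ht rP unfolding hasse_rooted_tree_def by blast
    then show "\<not> strict leq y r" using \<open>y \<in> P\<close> by blast
  qed
  obtain t w where tP: "t \<in> P" and wP: "w \<in> P" and st: "strict leq s t" and tw: "strict leq t w"
    using chain3[OF po fin ht cs us cl] by blast
  have sstrict: "\<And>x. x \<in> P \<Longrightarrow> x \<noteq> r \<Longrightarrow> x \<noteq> s \<Longrightarrow> strict leq s x"
    using above unfolding strict_def by auto
  have leqs: "\<And>x. x \<in> P \<Longrightarrow> leq x x" using po_refl[OF po] by blast

  define dm where "dm = fst M"
  define Mm where "Mm = snd M"
  have Mc0: "\<And>x y. x \<in> P \<Longrightarrow> y \<in> P \<Longrightarrow> leq x y \<Longrightarrow> Mm x y \<in> carrier_mat (dm y) (dm x)"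
    using pm unfolding is_pmod_def dm_def Mm_def by blast
  have Mid0: "\<And>x. x \<in> P \<Longrightarrow> Mm x x = 1\<^sub>m (dm x)"
    using pm unfolding is_pmod_def dm_def Mm_def by blast
  have Mcomp: "\<And>x y z. x \<in> P \<Longrightarrow> y \<in> P \<Longrightarrow> z \<in> P \<Longrightarrow> leq x y \<Longrightarrow> leq y z \<Longrightarrow> Mm y z * Mm x y = Mm x z"
    using pm unfolding is_pmod_def dm_def Mm_def by blast
  have "\<exists>\<phi>. (\<forall>u\<in>G1_carrier P leq. \<phi> u \<in> carrier_mat (dm (fst u)) (dm (snd u)) \<and> invertible_mat (\<phi> u)) \<and>
          (\<forall>u\<in>G1_carrier P leq. \<forall>v\<in>G1_carrier P leq. G1_le leq u v \<longrightarrow>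
             \<phi> v * Mm (snd u) (snd v) = Mm (fst u) (fst v) * \<phi> u)"
    using iso unfolding pmod_iso_def pullback_def d0_def d1_def dm_def Mm_def by simp
  then obtain \<phi> where \<phi>c0: "\<forall>u\<in>G1_carrier P leq. \<phi> u \<in> carrier_mat (dm (fst u)) (dm (snd u)) \<and> invertible_mat (\<phi> u)"
    and \<phi>e0: "\<forall>u\<in>G1_carrier P leq. \<forall>v\<in>G1_carrier P leq. G1_le leq u v \<longrightarrow>
             \<phi> v * Mm (snd u) (snd v) = Mm (fst u) (fst v) * \<phi> u" by blast
  have G1: "\<And>a b. a \<in> P \<Longrightarrow> b \<in> P \<Longrightarrow> strict leq a b \<Longrightarrow> (a, b) \<in> G1_carrier P leq"
    unfolding G1_carrier_def by simp
  have F: "\<And>a b c d. a \<in> P \<Longrightarrow> b \<in> P \<Longrightarrow> c \<in> P \<Longrightarrow> d \<in> P \<Longrightarrow> strict leq a b \<Longrightarrow> strict leq c d \<Longrightarrow>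
      leq b c \<Longrightarrow> \<phi> (c, d) * Mm b d = Mm a c * \<phi> (a, b)"
  proof -
    fix a b c d assume *: "a \<in> P" "b \<in> P" "c \<in> P" "d \<in> P" "strict leq a b" "strict leq c d" "leq b c"
    have "G1_le leq (a, b) (c, d)" unfolding G1_le_def using *(7) by simp
    then show "\<phi> (c, d) * Mm b d = Mm a c * \<phi> (a, b)" using \<phi>e0 G1[OF *(1,2,5)] G1[OF *(3,4,6)] by fastforce
  qed
  have \<phi>c: "\<And>a b. a \<in> P \<Longrightarrow> b \<in> P \<Longrightarrow> strict leq a b \<Longrightarrow> \<phi> (a, b) \<in> carrier_mat (dm a) (dm b) \<and> invertible_mat (\<phi> (a, b))"
    using \<phi>c0 G1 by fastforce
  have dmeq: "\<And>a b. a \<in> P \<Longrightarrow> b \<in> P \<Longrightarrow> strict leq a b \<Longrightarrow> dm a = dm b"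
  proof -
    fix a b assume *: "a \<in> P" "b \<in> P" "strict leq a b"
    have "square_mat (\<phi> (a, b))" using \<phi>c[OF *] unfolding invertible_mat_def by blast
    then show "dm a = dm b" using \<phi>c[OF *] by auto
  qed
  define m where "m = dm r"
  have dmP: "\<And>x. x \<in> P \<Longrightarrow> dm x = m"
  proof -
    fix x assume xP: "x \<in> P"
    show "dm x = m"
    proof (cases "x = r")
      case True then show ?thesis unfolding m_def by simp
    next
      case False
      have "strict leq r x" using root_le[OF po fin ht cs us xP] False unfolding strict_def by auto
      then show ?thesis unfolding m_def using dmeq[OF rP xP] by simp
    qed
  qed
  have Mc: "\<And>x y. x \<in> P \<Longrightarrow> y \<in> P \<Longrightarrow> leq x y \<Longrightarrow> Mm x y \<in> carrier_mat m m"
    using Mc0 dmP by metis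
  have Mid: "\<And>x. x \<in> P \<Longrightarrow> Mm x x = 1\<^sub>m m" using Mid0 dmP by metis
  define phi' where "phi' a b = (SOME B. inv_pair m (\<phi> (a, b)) B)" for a b
  have phinv: "\<And>a b. a \<in> P \<Longrightarrow> b \<in> P \<Longrightarrow> strict leq a b \<Longrightarrow> inv_pair m (\<phi> (a, b)) (phi' a b)"
  proof -
    fix a b assume *: "a \<in> P" "b \<in> P" "strict leq a b"
    have "\<phi> (a, b) \<in> carrier_mat m m" "invertible_mat (\<phi> (a, b))" using \<phi>c[OF *] dmP *(1,2) by auto
    then have "\<exists>B. inv_pair m (\<phi> (a, b)) B" using invertible_inv_pair by blast
    then show "inv_pair m (\<phi> (a, b)) (phi' a b)" unfolding phi'_def by (rule someI_ex)
  qed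
  have phic1: "\<And>a b. a \<in> P \<Longrightarrow> b \<in> P \<Longrightarrow> strict leq a b \<Longrightarrow> \<phi> (a, b) \<in> carrier_mat m m"
    and phic2: "\<And>a b. a \<in> P \<Longrightarrow> b \<in> P \<Longrightarrow> strict leq a b \<Longrightarrow> phi' a b \<in> carrier_mat m m"
    and phic3: "\<And>a b. a \<in> P \<Longrightarrow> b \<in> P \<Longrightarrow> strict leq a b \<Longrightarrow> \<phi> (a, b) * phi' a b = 1\<^sub>m m"
    and phic4: "\<And>a b. a \<in> P \<Longrightarrow> b \<in> P \<Longrightarrow> strict leq a b \<Longrightarrow> phi' a b * \<phi> (a, b) = 1\<^sub>m m"
    using phinv unfolding inv_pair_def by blast+
  note phic = phic1 phic2 phic3 phic4

  define A0 where "A0 = Mm r s"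
  define \<Theta> where "\<Theta> = \<phi> (r, s)"
  define E where "E = A0 * \<Theta>"
  have A0c: "A0 \<in> carrier_mat m m" unfolding A0_def using Mc[OF rP sP] rs unfolding strict_def by auto
  have \<Theta>c: "\<Theta> \<in> carrier_mat m m" unfolding \<Theta>_def using phic[OF rP sP rs] by auto
  have Ec: "E \<in> carrier_mat m m" unfolding E_def using A0c \<Theta>c by simp
  define B where "B x = phi' s x" for x
  have I1: "\<And>x. x \<in> P \<Longrightarrow> strict leq s x \<Longrightarrow> Mm s x = B x * E"
  proof -
    fix x assume xP: "x \<in> P" and sx: "strict leq s x"
    have e: "\<phi> (s, x) * Mm s x = E" using F[OF rP sP sP xP rs sx leqs[OF sP]] unfolding E_def A0_def \<Theta>_def .
    have Msx: "Mm s x \<in> carrier_mat m m" using Mc[OF sP xP] sx unfolding strict_def by auto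
    note pc = phic[OF sP xP sx]
    have "B x * E = phi' s x * (\<phi> (s, x) * Mm s x)" unfolding B_def e ..
    also have "\<dots> = (phi' s x * \<phi> (s, x)) * Mm s x"
      using pc Msx by (intro assoc_mult_mat[symmetric, of _ m m _ m _ m]) auto
    also have "\<dots> = Mm s x" using pc Msx left_mult_one_mat[OF Msx] by (simp del: assoc_mult_mat)
    finally show "Mm s x = B x * E" by simp
  qed
  have Bc: "\<And>x. x \<in> P \<Longrightarrow> strict leq s x \<Longrightarrow> B x \<in> carrier_mat m m" unfolding B_def using phic sP by blast

  have sw: "strict leq s w" using strict_trans1[OF po sP tP wP st] tw unfolding strict_def by auto
  define Cm where "Cm = \<phi> (s, w) * phi' t w * B t"
  have CC: "inv_pair m Cm (\<phi> (s, t) * (\<phi> (t, w) * B w))"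
    unfolding Cm_def B_def
    by (rule inv_pair_mult[OF inv_pair_mult[OF phinv[OF sP wP sw] inv_pair_sym[OF phinv[OF tP wP tw]]]
          inv_pair_sym[OF phinv[OF sP tP st]]])
  have ECm: "E = Cm * E * E"
  proof -
    note pw = phic[OF sP wP sw] and ptw = phic[OF tP wP tw]
    have Btc: "B t \<in> carrier_mat m m" using Bc[OF tP st] .
    have Bwc: "B w \<in> carrier_mat m m" using Bc[OF wP sw] .
    have Mrt: "Mm r t = Mm s t * A0" unfolding A0_def
      using Mcomp[OF rP sP tP] rs st unfolding strict_def by auto
    have "\<phi> (t, w) * Mm s w = Mm r t * \<Theta>" unfolding \<Theta>_def
      by (rule F[OF rP sP tP wP rs tw]) (use st in \<open>simp add: strict_def\<close>)
    then have 1: "\<phi> (t, w) * (B w * E) = B t * E * A0 * \<Theta>" unfolding I1[OF wP sw] Mrt I1[OF tP st] .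
    have 2: "B t * E * A0 * \<Theta> = B t * E * E" unfolding E_def using Btc A0c \<Theta>c
      by (simp add: sq_assoc[where n=m] sq_mult_carrier)
    have "B w * E = phi' t w * (\<phi> (t, w) * (B w * E))"
      using inv_pair_cancel(1)[OF phinv[OF tP wP tw], of "B w * E" m] Bwc Ec by simp
    also have "\<dots> = phi' t w * (B t * E * E)" using 1 2 by simp
    finally have 3: "B w * E = phi' t w * (B t * E * E)" .
    have "E = \<phi> (s, w) * (B w * E)" unfolding B_def using inv_pair_cancel(2)[OF phinv[OF sP wP sw] Ec] by simp
    also have "\<dots> = \<phi> (s, w) * (phi' t w * (B t * E * E))" unfolding 3 ..
    also have "\<dots> = Cm * E * E" unfolding Cm_def using pw ptw Btc Ec
      by (simp add: sq_assoc[where n=m] sq_mult_carrier)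
    finally show ?thesis .
  qed
  obtain S S' U U' n d where nd: "n + d = m" and SS: "inv_pair m S S'" and UU: "inv_pair n U U'"
    and ES: "E * S = S * four_block_mat U (0\<^sub>m n d) (0\<^sub>m d n) (0\<^sub>m d d)"
    using Fitting[OF Ec CC ECm] by blast
  define J where "J = four_block_mat U (0\<^sub>m n d) (0\<^sub>m d n) (0\<^sub>m d d)"
  define K where "K = four_block_mat U (0\<^sub>m n d) (0\<^sub>m d n) (1\<^sub>m d)"
  define K' where "K' = four_block_mat U' (0\<^sub>m n d) (0\<^sub>m d n) (1\<^sub>m d)"
  define Dd :: "'k mat" where "Dd = Dm n d"
  have Uc: "U \<in> carrier_mat n n" "U' \<in> carrier_mat n n" "U * U' = 1\<^sub>m n" "U' * U = 1\<^sub>m n"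
    using UU unfolding inv_pair_def by auto
  have KK: "inv_pair m K K'" unfolding K_def K'_def using inv_pair_diag[OF UU inv_pair_one[of d]] nd by simp
  have Jc: "J \<in> carrier_mat m m" unfolding J_def using Uc nd by auto
  have Kc: "K \<in> carrier_mat m m" "K' \<in> carrier_mat m m" using KK unfolding inv_pair_def by auto
  have Ddc: "Dd \<in> carrier_mat m m" unfolding Dd_def using Dm_carrier[of n d] nd by simp
  have Sc: "S \<in> carrier_mat m m" "S' \<in> carrier_mat m m" using SS unfolding inv_pair_def by auto
  have ESJ: "E * S = S * J" using ES unfolding J_def .
  have KD: "K * Dd = J" unfolding K_def Dd_def Dm_def J_def using Uc
    by (simp add: fbm[of _ n n _ d _ d _ _ n _ d])
  have JK': "J * K' = Dd" unfolding K'_def Dd_def Dm_def J_def using Uc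
    by (simp add: fbm[of _ n n _ d _ d _ _ n _ d])
  have JK: "J * K = J * J" unfolding K_def J_def using Uc
    by (simp add: fbm[of _ n n _ d _ d _ _ n _ d])
  have JD: "J * Dd = J" unfolding Dd_def Dm_def J_def using Uc
    by (simp add: fbm[of _ n n _ d _ d _ _ n _ d])
  define \<Psi> where "\<Psi> x = (if x = r then \<Theta> * S * K' else if x = s then S else B x * S * K)" for x
  define \<Psi>' where "\<Psi>' x = (if x = r then K * (S' * phi' r s) else if x = s then S' else K' * (S' * \<phi> (s, x)))" for x
  have \<Psi>\<Psi>: "\<And>x. x \<in> P \<Longrightarrow> inv_pair m (\<Psi> x) (\<Psi>' x)"
  proof -
    fix x assume xP: "x \<in> P"
    show "inv_pair m (\<Psi> x) (\<Psi>' x)"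
    proof (cases "x = r")
      case True
      then show ?thesis unfolding \<Psi>_def \<Psi>'_def \<Theta>_def
        using inv_pair_mult[OF inv_pair_mult[OF phinv[OF rP sP rs] SS] inv_pair_sym[OF KK]] by simp
    next
      case False
      note xr = False
      show ?thesis
      proof (cases "x = s")
        case True
        then show ?thesis unfolding \<Psi>_def \<Psi>'_def using SS xr by simp
      next
        case False
        have sx: "strict leq s x" using sstrict[OF xP xr False] .
        show ?thesis unfolding \<Psi>_def \<Psi>'_def B_def
          using inv_pair_mult[OF inv_pair_mult[OF inv_pair_sym[OF phinv[OF sP xP sx]] SS] KK] xr False by simp
      qed
    qed
  qed
  have \<Psi>c: "\<And>x. x \<in> P \<Longrightarrow> \<Psi> x \<in> carrier_mat m m \<and> \<Psi>' x \<in> carrier_mat m m" using \<Psi>\<Psi> unfolding inv_pair_def by blast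
  have aux_s: "\<And>y. y \<in> P \<Longrightarrow> strict leq s y \<Longrightarrow> Mm s y * S = \<Psi> y * Dd"
  proof -
    fix y assume yP: "y \<in> P" and sy: "strict leq s y"
    have yr: "y \<noteq> r" using sy rmin[OF sP] by auto
    have ys: "y \<noteq> s" using sy unfolding strict_def by auto
    have Byc: "B y \<in> carrier_mat m m" using Bc[OF yP sy] .
    have "Mm s y * S = B y * (E * S)" unfolding I1[OF yP sy] using Byc Ec Sc by simp
    also have "\<dots> = B y * (S * J)" unfolding ESJ ..
    also have "\<dots> = B y * S * (K * Dd)" unfolding KD using Byc Sc Jc by simp
    also have "\<dots> = \<Psi> y * Dd" unfolding \<Psi>_def using yr ys Byc Sc Kc Ddc
      by (simp add: sq_assoc[where n=m] sq_mult_carrier)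
    finally show "Mm s y * S = \<Psi> y * Dd" .
  qed
  have aux_r: "Mm r s * \<Psi> r = S * Dd"
  proof -
    have "Mm r s * \<Psi> r = (A0 * \<Theta>) * S * K'" unfolding \<Psi>_def A0_def using A0c \<Theta>c Sc Kc
      by (simp add: sq_assoc[where n=m] sq_mult_carrier A0_def)
    also have "\<dots> = S * (J * K')" unfolding E_def[symmetric] ESJ using Sc Jc Kc by simp
    also have "\<dots> = S * Dd" unfolding JK' ..
    finally show ?thesis .
  qed
  have MC: "\<And>x y. x \<in> P \<Longrightarrow> y \<in> P \<Longrightarrow> strict leq x y \<Longrightarrow> Mm x y * \<Psi> x = \<Psi> y * Dd"
  proof -
    fix x y assume xP: "x \<in> P" and yP: "y \<in> P" and xy: "strict leq x y"
    have yr: "y \<noteq> r" using xy rmin[OF xP] by auto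
    show "Mm x y * \<Psi> x = \<Psi> y * Dd"
    proof (cases "x = r")
      case True
      note xr = True
      show ?thesis
      proof (cases "y = s")
        case True
        have "s \<noteq> r" using rs unfolding strict_def by auto
        then show ?thesis using aux_r xr True unfolding \<Psi>_def by simp
      next
        case False
        have sy: "strict leq s y" using sstrict[OF yP yr False] .
        have Msy: "Mm s y \<in> carrier_mat m m" using Mc[OF sP yP] sy unfolding strict_def by auto
        have Mrs: "Mm r s \<in> carrier_mat m m" using A0c unfolding A0_def .
        have "Mm r y = Mm s y * Mm r s" using Mcomp[OF rP sP yP] rs sy unfolding strict_def by auto
        then have "Mm x y * \<Psi> x = Mm s y * (Mm r s * \<Psi> r)" unfolding xr
          using Msy Mrs \<Psi>c[OF rP] by (simp add: sq_assoc[where n=m])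
        also have "\<dots> = (Mm s y * S) * Dd" unfolding aux_r using Msy Sc Ddc by (simp add: sq_assoc[where n=m])
        also have "\<dots> = \<Psi> y * (Dd * Dd)" unfolding aux_s[OF yP sy] using \<Psi>c[OF yP] Ddc by (simp add: sq_assoc[where n=m])
        also have "Dd * Dd = Dd" unfolding Dd_def Dm_def
          by (simp add: fbm[of _ n n _ d _ d _ _ n _ d])
        finally show ?thesis .
      qed
    next
      case False
      note xr = False
      show ?thesis
      proof (cases "x = s")
        case True
        then show ?thesis using aux_s[OF yP] xy xr unfolding \<Psi>_def by simp
      next
        case False
        note xs = False
        have sx: "strict leq s x" using sstrict[OF xP xr xs] .
        have sy: "strict leq s y" using strict_trans1[OF po sP xP yP sx] xy unfolding strict_def by auto
        have Bxc: "B x \<in> carrier_mat m m" using Bc[OF xP sx] .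
        have Mxy: "Mm x y \<in> carrier_mat m m" using Mc[OF xP yP] xy unfolding strict_def by auto
        have Msx: "Mm s x \<in> carrier_mat m m" using Mc[OF sP xP] sx unfolding strict_def by auto
        note pxy = phic[OF xP yP xy] and psx = phic[OF sP xP sx]
        define Z where "Z = phi' x y * B x"
        have Zc: "Z \<in> carrier_mat m m" unfolding Z_def using pxy Bxc by simp
        have f: "\<phi> (x, y) * Mm x y = Mm s x * \<phi> (s, x)" using F[OF sP xP xP yP sx xy leqs[OF xP]] .
        have MB: "Mm x y * B x = Z * E"
        proof -
          have "Mm x y * B x = phi' x y * (\<phi> (x, y) * Mm x y) * B x"
            using inv_pair_cancel(1)[OF phinv[OF xP yP xy] Mxy] by simp
          also have "\<dots> = phi' x y * (B x * E) * (\<phi> (s, x) * B x)" unfolding f I1[OF xP sx]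
            using pxy psx Bxc Ec by (simp add: sq_assoc[where n=m] sq_mult_carrier)
          also have "\<phi> (s, x) * B x = 1\<^sub>m m" using psx unfolding B_def by simp
          also have "phi' x y * (B x * E) * 1\<^sub>m m = Z * E" unfolding Z_def
            using pxy Bxc Ec by (simp add: sq_assoc[where n=m] sq_mult_carrier)
          finally show ?thesis .
        qed
        have "Mm x y * \<Psi> x = (Mm x y * B x) * S * K" unfolding \<Psi>_def using xr xs Mxy Bxc Sc Kc
          by (simp add: sq_assoc[where n=m] sq_mult_carrier)
        also have "\<dots> = Z * (E * S) * K" unfolding MB using Zc Ec Sc Kc
          by (simp add: sq_assoc[where n=m] sq_mult_carrier)
        also have "\<dots> = Z * S * (J * K)" unfolding ESJ using Zc Sc Jc Kc
          by (simp add: sq_assoc[where n=m] sq_mult_carrier)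
        also have "\<dots> = Z * S * (J * J)" unfolding JK ..
        finally have L: "Mm x y * \<Psi> x = Z * S * (J * J)" .
        have "\<Psi> y * Dd = Mm s y * S" using aux_s[OF yP sy] by simp
        also have "\<dots> = Mm x y * (Mm s x * S)"
        proof -
          have "Mm x y * Mm s x = Mm s y" using Mcomp[OF sP xP yP] sx xy unfolding strict_def by auto
          moreover have "Mm x y * (Mm s x * S) = (Mm x y * Mm s x) * S"
            using Mxy Msx Sc(1) by (rule assoc_mult_mat[symmetric])
          ultimately show ?thesis by simp
        qed
        also have "\<dots> = (Mm x y * B x) * (E * S)" unfolding I1[OF xP sx] using Mxy Bxc Ec Sc
          by (simp add: sq_assoc[where n=m] sq_mult_carrier)
        also have "\<dots> = Z * E * (S * J)" unfolding MB ESJ ..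
        also have "\<dots> = Z * (E * S) * J" using Zc Ec Sc Jc
          by (simp add: sq_assoc[where n=m] sq_mult_carrier)
        also have "\<dots> = Z * S * (J * J)" unfolding ESJ using Zc Sc Jc
          by (simp add: sq_assoc[where n=m] sq_mult_carrier)
        finally show ?thesis using L by simp
      qed
    qed
  qed
  have Mfac: "\<And>x y. x \<in> P \<Longrightarrow> y \<in> P \<Longrightarrow> strict leq x y \<Longrightarrow> Mm x y = \<Psi> y * Dd * \<Psi>' x"
  proof -
    fix x y assume xP: "x \<in> P" and yP: "y \<in> P" and xy: "strict leq x y"
    have Mxy: "Mm x y \<in> carrier_mat m m" using Mc[OF xP yP] xy unfolding strict_def by auto
    have "Mm x y = Mm x y * (\<Psi> x * \<Psi>' x)" using \<Psi>\<Psi>[OF xP] Mxy unfolding inv_pair_def by simp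
    also have "\<dots> = (Mm x y * \<Psi> x) * \<Psi>' x" using \<Psi>c[OF xP] Mxy
      by (intro assoc_mult_mat[symmetric, of _ m m _ m _ m]) auto
    also have "\<dots> = \<Psi> y * Dd * \<Psi>' x" unfolding MC[OF xP yP xy] ..
    finally show "Mm x y = \<Psi> y * Dd * \<Psi>' x" .
  qed
  have kd: "\<And>x y. x \<in> P \<Longrightarrow> y \<in> P \<Longrightarrow> strict leq x y \<Longrightarrow> kernel_dim (Mm x y) = d"
    using Mfac kernel_dim_equiv[OF \<Psi>\<Psi> inv_pair_sym[OF \<Psi>\<Psi>] Ddc] kernel_dim_Dm unfolding Dd_def by metis
  have rk: "\<And>x y. x \<in> P \<Longrightarrow> y \<in> P \<Longrightarrow> strict leq x y \<Longrightarrow> mat_rank (Mm x y) = n"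
  proof -
    fix x y assume xP: "x \<in> P" and yP: "y \<in> P" and xy: "strict leq x y"
    have "mat_rank (Mm x y) = m - kernel_dim Dd"
      unfolding Mfac[OF xP yP xy] by (rule rank_equiv[OF \<Psi>\<Psi>[OF yP] inv_pair_sym[OF \<Psi>\<Psi>[OF xP]] Ddc])
    then show "mat_rank (Mm x y) = n" unfolding Dd_def kernel_dim_Dm using nd by simp
  qed
  have isoN: "pmod_iso P leq M (pmod_sum (pmod_pow const_mod n) (pmod_pow S_mod d))"
    unfolding pmod_iso_def
  proof (intro exI[of _ \<Psi>'] conjI ballI impI)
    fix x assume xP: "x \<in> P"
    show "\<Psi>' x \<in> carrier_mat (fst (pmod_sum (pmod_pow const_mod n) (pmod_pow S_mod d)) x) (fst M x)"
      using \<Psi>c[OF xP] dmP[OF xP] nd unfolding dm_def by simp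
    show "invertible_mat (\<Psi>' x)" using inv_pair_invertible[OF inv_pair_sym[OF \<Psi>\<Psi>[OF xP]]] .
  next
    fix x y assume xP: "x \<in> P" and yP: "y \<in> P" and xy: "leq x y"
    show "\<Psi>' y * snd M x y = snd (pmod_sum (pmod_pow const_mod n) (pmod_pow S_mod d)) x y * \<Psi>' x"
    proof (cases "x = y")
      case True
      then show ?thesis unfolding N_snd Mm_def[symmetric] using Mid[OF xP] \<Psi>c[OF xP, THEN conjunct2] nd by simp
    next
      case False
      have sxy: "strict leq x y" using xy False unfolding strict_def by simp
      have "\<Psi>' y * Mm x y = (\<Psi>' y * \<Psi> y) * Dd * \<Psi>' x" unfolding Mfac[OF xP yP sxy]
        using \<Psi>c[OF xP] \<Psi>c[OF yP] Ddc by (simp add: sq_assoc[where n=m] sq_mult_carrier)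
      also have "\<dots> = Dd * \<Psi>' x" using \<Psi>\<Psi>[OF yP] Ddc unfolding inv_pair_def by simp
      finally show ?thesis unfolding N_snd Mm_def[symmetric] using False unfolding Dd_def by simp
    qed
  qed
  show ?thesis
    using isoN rk kd unfolding Mm_def by blast
qed

end
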